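(* In the quality-unaware crowdsensing role selection game described in the context (with $w=1$), on the regime $[0,\Phi_0]$, where $\Phi_0=1-\eta s-p-(1-\eta)$, the function $\Lambda(\Phi)$ is either monotonically increasing in $\Phi$, or first decreasing and then increasing in $\Phi$ (i.e., there is $\Phi'\in[0,\Phi_0]$ such that $\Lambda$ is decreasing on $[0,\Phi']$ and increasing on $[\Phi',\Phi_0]$).
   Context: Users form a continuum; a user's type is $(v,c)\in[0,1]^2$, distributed uniformly on $[0,1]^2$. Parameters: weight $w=1$, $s\ge0$, $\eta\in[0,1]$, $p\ge0$. Each user chooses a role in $\{\mathrm S,\mathrm R,\mathrm A\}$. Given a number $\Phi$, payoffs are $\pi_{vc}(\mathrm{S})=v-c+\Phi$, $\pi_{vc}(\mathrm{R})=\eta(v-s)-p$, $\pi_{vc}(\mathrm{A})=0$, and a requester pays $\beta_{vc}=(1-\eta)(v-s)+p$. Define $\widetilde{S}^{\mathrm S}(\Phi)=\{(v,c)\in[0,1]^2:\pi_{vc}(\mathrm S)>\pi_{vc}(\mathrm R),\pi_{vc}(\mathrm S)>\pi_{vc}(\mathrm A)\}$, $\widetilde{S}^{\mathrm R}(\Phi)=\{(v,c)\in[0,1]^2:\pi_{vc}(\mathrm R)>\pi_{vc}(\mathrm S),\pi_{vc}(\mathrm R)>\pi_{vc}(\mathrm A)\}$, $N^{se}(\Phi)=\iint_{\widetilde{S}^{\mathrm S}(\Phi)}\mathrm dv\,\mathrm dc$, $B^{se}(\Phi)=\iint_{\widetilde{S}^{\mathrm R}(\Phi)}[(1-\eta)(v-s)+p]\,\mathrm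 dv\,\mathrm dc$, and $\Lambda(\Phi)=\Phi N^{se}(\Phi)-B^{se}(\Phi)$ (on $[0,\Phi_0]$ this is the function the paper denotes $\Lambda_l$). *)

theory Defs
  imports "HOL-Analysis.Analysis"
begin

text \<open>Quality-unaware crowdsensing role selection game with weight w = 1.
  A user type is a pair (v, c) in the unit square, uniformly distributed
  (density 1). Parameters: eta, s, p.\<close>

definition piS :: "real \<Rightarrow> real \<Rightarrow> real \<Rightarrow> real" where
  "piS \<Phi> v c = v - c + \<Phi>"

definition piR :: "real \<Rightarrow> real \<Rightarrow> real \<Rightarrow> real \<Rightarrow> real" where
  "piR \<eta> s p v = \<eta> * (v - s) - p"

definition piA :: real where
  "piA = 0"

definition unit_square :: "(real \<times> real) set" where
  "unit_square = {0..1} \<times> {0..1}"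

definition SetS :: "real \<Rightarrow> real \<Rightarrow> real \<Rightarrow> real \<Rightarrow> (real \<times> real) set" where
  "SetS \<eta> s p \<Phi> = {(v, c) \<in> unit_square.
      piS \<Phi> v c > piR \<eta> s p v \<and> piS \<Phi> v c > piA}"

definition SetR :: "real \<Rightarrow> real \<Rightarrow> real \<Rightarrow> real \<Rightarrow> (real \<times> real) set" where
  "SetR \<eta> s p \<Phi> = {(v, c) \<in> unit_square.
      piR \<eta> s p v > piS \<Phi> v c \<and> piR \<eta> s p v > piA}"

definition Nse :: "real \<Rightarrow> real \<Rightarrow> real \<Rightarrow> real \<Rightarrow> real" where
  "Nse \<eta> s p \<Phi> = integral (SetS \<eta> s p \<Phi>) (\<lambda>_. 1)"

definition Bse :: "real \<Rightarrow> real \<Rightarrow> real \<Rightarrow> real \<Rightarrow> real" where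
  "Bse \<eta> s p \<Phi> = integral (SetR \<eta> s p \<Phi>)
      (\<lambda>(v, c). (1 - \<eta>) * (v - s) + p)"

definition Lambda :: "real \<Rightarrow> real \<Rightarrow> real \<Rightarrow> real \<Rightarrow> real" where
  "Lambda \<eta> s p \<Phi> = \<Phi> * Nse \<eta> s p \<Phi> - Bse \<eta> s p \<Phi>"

definition Phi0 :: "real \<Rightarrow> real \<Rightarrow> real \<Rightarrow> real" where
  "Phi0 \<eta> s p = 1 - \<eta> * s - p - (1 - \<eta>)"

end

theory Submission
  imports Defs
begin

lemma unit_square_cbox: "unit_square = cbox (0,0) (1,1)"
  unfolding unit_square_def by (simp add: cbox_Pair_eq)

lemma meas_aux:
  fixes f g :: "real \<times> real \<Rightarrow> real"
  assumes "continuous_on UNIV f" "continuous_on UNIV g"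
  shows "{x \<in> unit_square. f x > 0 \<and> g x > 0} \<in> lmeasurable"
proof -
  have eq: "{x \<in> unit_square. f x > 0 \<and> g x > 0} = unit_square \<inter> ({x. 0 < f x} \<inter> {x. 0 < g x})"
    by auto
  have o: "open ({x. 0 < f x} \<inter> {x. 0 < g x})"
    using assms by (intro open_Int open_Collect_less) (auto intro: continuous_intros)
  have "unit_square \<inter> ({x. 0 < f x} \<inter> {x. 0 < g x}) \<in> sets lebesgue"
    apply (rule sets.Int)
    apply (simp add: unit_square_cbox)
    using o by (simp add: borel_open)
  moreover have "bounded (unit_square \<inter> ({x. 0 < f x} \<inter> {x. 0 < g x}))"
    by (simp add: unit_square_cbox bounded_Int)
  ultimately show ?thesis using eq bounded_set_imp_lmeasurable by metis
qed

lemma SetS_meas: "SetS \<eta> s p \<Phi> \<in> lmeasurable"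
proof -
  have "SetS \<eta> s p \<Phi> = {x \<in> unit_square. (\<lambda>(v,c). piS \<Phi> v c - piR \<eta> s p v) x > 0 \<and> (\<lambda>(v,c). piS \<Phi> v c) x > 0}"
    unfolding SetS_def piA_def by auto
  also have "\<dots> \<in> lmeasurable"
    by (rule meas_aux) (auto simp: piS_def piR_def case_prod_beta intro!: continuous_intros)
  finally show ?thesis .
qed

lemma SetR_meas: "SetR \<eta> s p \<Phi> \<in> lmeasurable"
proof -
  have "SetR \<eta> s p \<Phi> = {x \<in> unit_square. (\<lambda>(v,c). piR \<eta> s p v - piS \<Phi> v c) x > 0 \<and> (\<lambda>(v,c). piR \<eta> s p v) x > 0}"
    unfolding SetR_def piA_def by auto
  also have "\<dots> \<in> lmeasurable"
    by (rule meas_aux) (auto simp: piS_def piR_def case_prod_beta intro!: continuous_intros)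
  finally show ?thesis .
qed

lemma Bint: "(\<lambda>(v::real, c::real). (1 - \<eta>) * (v - s) + p) integrable_on SetR \<eta> s p \<Phi>"
proof -
  have "(\<lambda>(v::real, c::real). (1 - \<eta>) * (v - s) + p) absolutely_integrable_on cbox (0,0) (1,1)"
    by (rule absolutely_integrable_continuous) (auto simp: case_prod_beta intro!: continuous_intros)
  then have "(\<lambda>(v::real, c::real). (1 - \<eta>) * (v - s) + p) absolutely_integrable_on SetR \<eta> s p \<Phi>"
    apply (rule set_integrable_subset)
    using SetR_meas apply blast
    by (auto simp: SetR_def unit_square_cbox)
  then show ?thesis using set_lebesgue_integral_eq_integral(1) by blast
qed

lemma Nse_mono:
  assumes "\<Phi>1 \<le> \<Phi>2"
  shows "Nse \<eta> s p \<Phi>1 \<le> Nse \<eta> s p \<Phi>2"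
  unfolding Nse_def
  apply (rule integral_subset_le)
  using assms apply (auto simp: SetS_def piS_def piR_def piA_def)[1]
  by (auto intro: integrable_on_const SetS_meas)

lemma Nse_nonneg: "0 \<le> Nse \<eta> s p \<Phi>"
  unfolding Nse_def by (rule integral_nonneg) (auto intro: integrable_on_const SetS_meas)

lemma Bse_mono:
  assumes "\<Phi>1 \<le> \<Phi>2" "0 \<le> \<eta>" "\<eta> \<le> 1" "p \<ge> 0"
  shows "Bse \<eta> s p \<Phi>2 \<le> Bse \<eta> s p \<Phi>1"
  unfolding Bse_def
proof (rule integral_subset_le)
  show "SetR \<eta> s p \<Phi>2 \<subseteq> SetR \<eta> s p \<Phi>1"
    using assms(1) by (auto simp: SetR_def piS_def piR_def piA_def)
  show "\<forall>x\<in>SetR \<eta> s p \<Phi>1. 0 \<le> (case x of (v, c) \<Rightarrow> (1 - \<eta>) * (v - s) + p)"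
  proof
    fix x assume "x \<in> SetR \<eta> s p \<Phi>1"
    then obtain v c where x: "x = (v,c)" and h: "\<eta> * (v - s) - p > 0"
      by (auto simp: SetR_def piR_def piA_def)
    have "\<eta> * (v - s) > 0" using h assms by linarith
    then have "v - s > 0" using assms(2) by (simp add: zero_less_mult_iff)
    then have "(1 - \<eta>) * (v - s) \<ge> 0" using assms(3) by simp
    then show "0 \<le> (case x of (v, c) \<Rightarrow> (1 - \<eta>) * (v - s) + p)" using x assms(4) by simp
  qed
qed (rule Bint)+

theorem lemma2:
  fixes \<eta> s p :: real
  assumes "s \<ge> 0" and "0 \<le> \<eta>" and "\<eta> \<le> 1" and "p \<ge> 0"
  shows "mono_on {0..Phi0 \<eta> s p} (Lambda \<eta> s p)
    \<or> (\<exists>\<Phi>'\<in>{0..Phi0 \<eta> s p}.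
         antimono_on {0..\<Phi>'} (Lambda \<eta> s p)
       \<and> mono_on {\<Phi>'..Phi0 \<eta> s p} (Lambda \<eta> s p))"
proof (rule disjI1, rule mono_onI)
  fix a b assume ab: "a \<in> {0..Phi0 \<eta> s p}" "b \<in> {0..Phi0 \<eta> s p}" "a \<le> b"
  have N: "0 \<le> Nse \<eta> s p a" "Nse \<eta> s p a \<le> Nse \<eta> s p b"
    using Nse_nonneg Nse_mono ab(3) by auto
  have "a * Nse \<eta> s p a \<le> b * Nse \<eta> s p b"
    using ab N by (intro mult_mono) auto
  moreover have "Bse \<eta> s p b \<le> Bse \<eta> s p a" using Bse_mono ab(3) assms by blast
  ultimately show "Lambda \<eta> s p a \<le> Lambda \<eta> s p b" unfolding Lambda_def by linarith
qed

end
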